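(* Let $\mathcal{C}$ be a component of class $i$ (at an upper layer $l$) which has $\Omega(k)$ pairwise internally vertex-disjoint long connector paths. Then for every maximal matching $M$ in $\mathcal{H}_i$, the edges $\{v_{\mathcal{C}},w_{\mathcal{C}}\}$ of $M$ lying in $\mathcal{H}_i[\mathcal{C}]$ correspond (via their vertices $v,w$) to $\Omega(k)$ pairwise internally vertex-disjoint long connector paths for $\mathcal{C}$.
   Context: $G=(V,E)$ is a finite undirected graph with vertex connectivity $k$. Fix an integer $L$. The virtual graph $\mathcal{G}$ contains $3L$ copies of each $v\in V$: each lower layer $1,\dots,L$ contains one copy of every node; each upper layer $L+1,\dots,2L$ contains a type-1 copy and a type-2 copy of every node. Every copy of $v$ is adjacent to all other copies of $v$ and to all copies of each neighbor of $v$ in $G$. $\Psi$ maps virtual nodes to real nodes. There are classes $1,\dots,t$. For a fixed upper layer $l$, nodes of layers $1,\dots,l-1$ are old nodes, each assigned a class; a component of class $i$ is a connected component of the subgraph induced by old nodes of class $i$. A long connector path for $\mathcal{C}$ is a path $(s,v,w,u)$ with $s\in\mathcal{C}$, $u$ in a component $\mathcal{C}'\neq\mathcal{C}$ of class $i$ with $\Psi(\mathcal{C})\cap\Psi(\mathcal{C}')=\emptyset$, $v$ a type-2 and $w$ a type-1 node of layer $l$, $v$ having no neighbor in any component of class $i$ other than $\mathcal{C}$ and $w$ having no neighbor in $\mathcal{C}$; its internal vertices are $v,w$, and paths are internally vertex-disjoint if their sets of internal vertices are pairwise disjoint. The helper graph $\mathcal{H}_i[\mathcal{C}]$: for each type-2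 node $v$ of layer $l$, a node $v_{\mathcal{C}}$ is added iff $\Psi(v)\notin\Psi(\mathcal{C})$, $v$ has a neighbor in $\mathcal{C}$, and $v$ has no neighbor in another component of class $i$; for each such $v_{\mathcal{C}}$ and each type-1 neighbor $w$ of $v$ on layer $l$ that has a neighbor in some component $\mathcal{C}'\neq\mathcal{C}$ of class $i$ but no neighbor in $\mathcal{C}$, a node $w_{\mathcal{C}}$ and the edge $\{v_{\mathcal{C}},w_{\mathcal{C}}\}$ are added. $\mathcal{H}_i$ is the disjoint union of the $\mathcal{H}_i[\mathcal{C}]$ over all components $\mathcal{C}$ of class $i$. *)

theory Defs
  imports Complex_Main
begin

definition graph_connected :: "'a set \<Rightarrow> ('a \<Rightarrow> 'a \<Rightarrow> bool) \<Rightarrow> bool" where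
  "graph_connected X E \<longleftrightarrow>
     (\<forall>x\<in>X. \<forall>y\<in>X. (x, y) \<in> {(a, b). a \<in> X \<and> b \<in> X \<and> E a b}\<^sup>*)"

(* vertex connectivity: least number of vertices whose removal disconnects G
   or leaves at most one vertex (so K_n has connectivity n-1) *)
definition vertex_connectivity :: "'a set \<Rightarrow> ('a \<Rightarrow> 'a \<Rightarrow> bool) \<Rightarrow> nat" where
  "vertex_connectivity V E =
     (LEAST k. \<exists>S\<subseteq>V. card S = k \<and> (card (V - S) \<le> 1 \<or> \<not> graph_connected (V - S) E))"

(* virtual node: VN layer type base;  type 0 = lower layer node, 1/2 = type-1/type-2 copy *)
datatype 'a vnode = VN nat nat 'a

fun layer :: "'a vnode \<Rightarrow> nat" where "layer (VN j t x) = j"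
fun vtype :: "'a vnode \<Rightarrow> nat" where "vtype (VN j t x) = t"
fun Psi :: "'a vnode \<Rightarrow> 'a" where "Psi (VN j t x) = x"

definition vnodes :: "'a set \<Rightarrow> nat \<Rightarrow> 'a vnode set" where
  "vnodes V L =
     {VN j 0 x | j x. 1 \<le> j \<and> j \<le> L \<and> x \<in> V} \<union>
     {VN j t x | j t x. L + 1 \<le> j \<and> j \<le> 2 * L \<and> t \<in> {1, 2} \<and> x \<in> V}"

definition vadj :: "'a set \<Rightarrow> ('a \<Rightarrow> 'a \<Rightarrow> bool) \<Rightarrow> nat \<Rightarrow> 'a vnode \<Rightarrow> 'a vnode \<Rightarrow> bool" where
  "vadj V E L a b \<longleftrightarrow> a \<in> vnodes V L \<and> b \<in> vnodes V L \<and> a \<noteq> b \<and>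
     (Psi a = Psi b \<or> E (Psi a) (Psi b))"

definition has_nbr_in :: "'a set \<Rightarrow> ('a \<Rightarrow> 'a \<Rightarrow> bool) \<Rightarrow> nat \<Rightarrow> 'a vnode \<Rightarrow> 'a vnode set \<Rightarrow> bool" where
  "has_nbr_in V E L a X \<longleftrightarrow> (\<exists>b\<in>X. vadj V E L a b)"

definition class_nodes :: "'a set \<Rightarrow> nat \<Rightarrow> nat \<Rightarrow> ('a vnode \<Rightarrow> nat) \<Rightarrow> nat \<Rightarrow> 'a vnode set" where
  "class_nodes V L l cls i = {a \<in> vnodes V L. layer a < l \<and> cls a = i}"

definition components :: "'a set \<Rightarrow> ('a \<Rightarrow> 'a \<Rightarrow> bool) \<Rightarrow> nat \<Rightarrow> nat \<Rightarrow> ('a vnode \<Rightarrow> nat) \<Rightarrow> nat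
    \<Rightarrow> 'a vnode set set" where
  "components V E L l cls i =
     (let S = class_nodes V L l cls i
      in {{b. (a, b) \<in> {(x, y). x \<in> S \<and> y \<in> S \<and> vadj V E L x y}\<^sup>*} | a. a \<in> S})"

definition long_connector :: "'a set \<Rightarrow> ('a \<Rightarrow> 'a \<Rightarrow> bool) \<Rightarrow> nat \<Rightarrow> nat \<Rightarrow> ('a vnode \<Rightarrow> nat) \<Rightarrow> nat
    \<Rightarrow> 'a vnode set \<Rightarrow> 'a vnode \<times> 'a vnode \<times> 'a vnode \<times> 'a vnode \<Rightarrow> bool" where
  "long_connector V E L l cls i C p \<longleftrightarrow>
     (case p of (s, v, w, u) \<Rightarrow>
        C \<in> components V E L l cls i \<and> s \<in> C \<and>
        (\<exists>C'\<in>components V E L l cls i. C' \<noteq> C \<and> u \<in> C' \<and> Psi ` C \<inter> Psi ` C' = {}) \<and>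
        v \<in> vnodes V L \<and> layer v = l \<and> vtype v = 2 \<and>
        w \<in> vnodes V L \<and> layer w = l \<and> vtype w = 1 \<and>
        vadj V E L s v \<and> vadj V E L v w \<and> vadj V E L w u \<and>
        (\<forall>C'\<in>components V E L l cls i. C' \<noteq> C \<longrightarrow> \<not> has_nbr_in V E L v C') \<and>
        \<not> has_nbr_in V E L w C)"

fun internal :: "'a vnode \<times> 'a vnode \<times> 'a vnode \<times> 'a vnode \<Rightarrow> 'a vnode set" where
  "internal (s, v, w, u) = {v, w}"

definition internally_disjoint :: "('a vnode \<times> 'a vnode \<times> 'a vnode \<times> 'a vnode) set \<Rightarrow> bool" where
  "internally_disjoint P \<longleftrightarrow> (\<forall>p\<in>P. \<forall>q\<in>P. p \<noteq> q \<longrightarrow> internal p \<inter> internal q = {})"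

definition helper_vnode :: "'a set \<Rightarrow> ('a \<Rightarrow> 'a \<Rightarrow> bool) \<Rightarrow> nat \<Rightarrow> nat \<Rightarrow> ('a vnode \<Rightarrow> nat) \<Rightarrow> nat
    \<Rightarrow> 'a vnode set \<Rightarrow> 'a vnode \<Rightarrow> bool" where
  "helper_vnode V E L l cls i C v \<longleftrightarrow>
     v \<in> vnodes V L \<and> layer v = l \<and> vtype v = 2 \<and> Psi v \<notin> Psi ` C \<and>
     has_nbr_in V E L v C \<and>
     (\<forall>C'\<in>components V E L l cls i. C' \<noteq> C \<longrightarrow> \<not> has_nbr_in V E L v C')"

(* edge set of H_i = disjoint union of the H_i[C]; node x_C is the pair (x, C) *)
definition helper_edges :: "'a set \<Rightarrow> ('a \<Rightarrow> 'a \<Rightarrow> bool) \<Rightarrow> nat \<Rightarrow> nat \<Rightarrow> ('a vnode \<Rightarrow> nat) \<Rightarrow> nat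
    \<Rightarrow> ('a vnode \<times> 'a vnode set) set set" where
  "helper_edges V E L l cls i =
     {{(v, C), (w, C)} | v w C.
        C \<in> components V E L l cls i \<and> helper_vnode V E L l cls i C v \<and>
        w \<in> vnodes V L \<and> layer w = l \<and> vtype w = 1 \<and> vadj V E L v w \<and>
        (\<exists>C'\<in>components V E L l cls i. C' \<noteq> C \<and> has_nbr_in V E L w C') \<and>
        \<not> has_nbr_in V E L w C}"

definition maximal_matching :: "'b set set \<Rightarrow> 'b set set \<Rightarrow> bool" where
  "maximal_matching H M \<longleftrightarrow> M \<subseteq> H \<and>
     (\<forall>e\<in>M. \<forall>f\<in>M. e \<noteq> f \<longrightarrow> e \<inter> f = {}) \<and>
     (\<forall>e\<in>H - M. \<exists>f\<in>M. e \<inter> f \<noteq> {})"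

end

theory Submission
  imports Defs
begin

lemma vadj_sym: "(\<forall>x y. E x y \<longrightarrow> E y x) \<Longrightarrow> vadj V E L a b \<Longrightarrow> vadj V E L b a"
  by (auto simp: vadj_def)

lemma finite_vnodes: "finite V \<Longrightarrow> finite (vnodes V L)"
proof -
  assume f: "finite V"
  have "vnodes V L \<subseteq> (\<lambda>(j,t,x). VN j t x) ` ({..2*L} \<times> {..2::nat} \<times> V)"
    unfolding vnodes_def by (auto simp: image_iff)
  moreover have "finite ({..2*L} \<times> {..2::nat} \<times> V)" using f by simp
  ultimately show ?thesis by (meson finite_surj)
qed

lemma comp_sub:
  assumes "C \<in> components V E L l cls i"
  shows "C \<subseteq> class_nodes V L l cls i"
proof
  fix b assume b: "b \<in> C"
  obtain a where a: "a \<in> class_nodes V L l cls i"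
    and C: "C = {b. (a, b) \<in> {(x, y). x \<in> class_nodes V L l cls i \<and> y \<in> class_nodes V L l cls i \<and> vadj V E L x y}\<^sup>*}"
    using assms unfolding components_def Let_def by auto
  from b C have "(a, b) \<in> {(x, y). x \<in> class_nodes V L l cls i \<and> y \<in> class_nodes V L l cls i \<and> vadj V E L x y}\<^sup>*" by auto
  then show "b \<in> class_nodes V L l cls i" using a by (cases rule: rtranclE) auto
qed

lemma comp_disj:
  assumes sym: "\<forall>x y. E x y \<longrightarrow> E y x"
    and C: "C \<in> components V E L l cls i" and C': "C' \<in> components V E L l cls i"
    and ne: "C \<noteq> C'"
  shows "Psi ` C \<inter> Psi ` C' = {}"
proof (rule ccontr)
  define S where "S = class_nodes V L l cls i"
  define R where "R = {(x, y). x \<in> S \<and> y \<in> S \<and> vadj V E L x y}"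
  have symR: "sym R" unfolding R_def sym_def using vadj_sym[OF sym] by blast
  have symRs: "sym (R\<^sup>*)" using symR by (simp add: sym_rtrancl)
  obtain a where a: "a \<in> S" and Ca: "C = {b. (a, b) \<in> R\<^sup>*}"
    using C unfolding components_def Let_def S_def R_def by auto
  obtain a' where a': "a' \<in> S" and Ca': "C' = {b. (a', b) \<in> R\<^sup>*}"
    using C' unfolding components_def Let_def S_def R_def by auto
  assume "Psi ` C \<inter> Psi ` C' \<noteq> {}"
  then obtain x y where x: "x \<in> C" and y: "y \<in> C'" and p: "Psi x = Psi y" by auto
  have xS: "x \<in> S" using comp_sub[OF C] x S_def by auto
  have yS: "y \<in> S" using comp_sub[OF C'] y S_def by auto
  have "S \<subseteq> vnodes V L" unfolding S_def class_nodes_def by auto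
  hence "(x, y) \<in> R\<^sup>*"
    using xS yS p by (cases "x = y") (auto simp: R_def vadj_def intro!: r_into_rtrancl)
  hence "(a, y) \<in> R\<^sup>*" using x Ca by auto
  moreover have "(a', y) \<in> R\<^sup>*" using y Ca' by auto
  ultimately have aa: "(a, a') \<in> R\<^sup>*" using symRs by (meson rtrancl_trans symD)
  have "C = C'"
  proof
    show "C \<subseteq> C'" unfolding Ca Ca' using aa symRs by (auto intro: rtrancl_trans dest: symD)
    show "C' \<subseteq> C" unfolding Ca Ca' using aa by (auto intro: rtrancl_trans)
  qed
  with ne show False by simp
qed

lemma lc_edge:
  assumes sym: "\<forall>x y. E x y \<longrightarrow> E y x"
    and lc: "long_connector V E L l cls i C (s, v, w, u)"
  shows "{(v, C), (w, C)} \<in> helper_edges V E L l cls i"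
proof -
  from lc have C: "C \<in> components V E L l cls i" and sC: "s \<in> C"
    and vv: "v \<in> vnodes V L" "layer v = l" "vtype v = 2"
    and ww: "w \<in> vnodes V L" "layer w = l" "vtype w = 1"
    and a1: "vadj V E L s v" and a2: "vadj V E L v w" and a3: "vadj V E L w u"
    and nv: "\<forall>C'\<in>components V E L l cls i. C' \<noteq> C \<longrightarrow> \<not> has_nbr_in V E L v C'"
    and nw: "\<not> has_nbr_in V E L w C"
    and ex: "\<exists>C'\<in>components V E L l cls i. C' \<noteq> C \<and> u \<in> C' \<and> Psi ` C \<inter> Psi ` C' = {}"
    unfolding long_connector_def by auto
  have psi: "Psi v \<notin> Psi ` C"
  proof
    assume "Psi v \<in> Psi ` C"
    then obtain s' where s': "s' \<in> C" "Psi v = Psi s'" by auto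
    have "s' \<in> class_nodes V L l cls i" using comp_sub[OF C] s' by auto
    hence "s' \<in> vnodes V L" "layer s' < l" unfolding class_nodes_def by auto
    hence "vadj V E L w s'" using a2 s' ww sym by (auto simp: vadj_def)
    with nw s' show False by (auto simp: has_nbr_in_def)
  qed
  have "has_nbr_in V E L v C" using sC vadj_sym[OF sym a1] by (auto simp: has_nbr_in_def)
  hence hv: "helper_vnode V E L l cls i C v" using vv psi nv by (simp add: helper_vnode_def)
  have "\<exists>C'\<in>components V E L l cls i. C' \<noteq> C \<and> has_nbr_in V E L w C'"
    using ex a3 by (auto simp: has_nbr_in_def)
  thus ?thesis unfolding helper_edges_def mem_Collect_eq
    apply (rule_tac x=v in exI, rule_tac x=w in exI, rule_tac x=C in exI)
    using C hv ww a2 nw by simp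
qed

lemma edge_lc:
  assumes sym: "\<forall>x y. E x y \<longrightarrow> E y x"
    and e: "e \<in> helper_edges V E L l cls i" and eC: "e = {(v0, C), (w0, C)}"
  shows "\<exists>p. long_connector V E L l cls i C p \<and> (\<lambda>(s, v, w, u). {(v, C), (w, C)}) p = e"
proof -
  obtain v w C0 where e': "e = {(v, C0), (w, C0)}" and C0: "C0 \<in> components V E L l cls i"
    and hv: "helper_vnode V E L l cls i C0 v" and ww: "w \<in> vnodes V L" "layer w = l" "vtype w = 1"
    and a2: "vadj V E L v w"
    and ex: "\<exists>C'\<in>components V E L l cls i. C' \<noteq> C0 \<and> has_nbr_in V E L w C'"
    and nw: "\<not> has_nbr_in V E L w C0"
  proof -
    have "\<exists>v w C0. e = {(v, C0), (w, C0)} \<and> (C0 \<in> components V E L l cls i \<and> helper_vnode V E L l cls i C0 v \<and>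
        w \<in> vnodes V L \<and> layer w = l \<and> vtype w = 1 \<and> vadj V E L v w \<and>
        (\<exists>C'\<in>components V E L l cls i. C' \<noteq> C0 \<and> has_nbr_in V E L w C') \<and>
        \<not> has_nbr_in V E L w C0)"
      using e unfolding helper_edges_def by (simp only: mem_Collect_eq)
    then show ?thesis using that by (elim exE conjE) assumption
  qed
  have "(v, C0) \<in> e" using e' by simp
  hence "C0 = C" using eC by blast
  note * = e' C0 hv ww a2 ex nw
  have **: "e = {(v, C), (w, C)}" using e' \<open>C0 = C\<close> by simp
  from hv obtain s where s: "s \<in> C0" "vadj V E L v s" unfolding helper_vnode_def has_nbr_in_def by auto
  from ex obtain C' u where C': "C' \<in> components V E L l cls i" "C' \<noteq> C0" "u \<in> C'" "vadj V E L w u"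
    unfolding has_nbr_in_def by auto
  have hv': "v \<in> vnodes V L" "layer v = l" "vtype v = 2"
    "\<forall>C'\<in>components V E L l cls i. C' \<noteq> C \<longrightarrow> \<not> has_nbr_in V E L v C'"
    using hv \<open>C0 = C\<close> unfolding helper_vnode_def by auto
  have dj: "Psi ` C \<inter> Psi ` C' = {}" using comp_disj[OF sym C0 C'(1)] C'(2) \<open>C0 = C\<close> by simp
  have ex2: "\<exists>C''\<in>components V E L l cls i. C'' \<noteq> C \<and> u \<in> C'' \<and> Psi ` C \<inter> Psi ` C'' = {}"
    using C' dj \<open>C0 = C\<close> by blast
  have "long_connector V E L l cls i C (s, v, w, u)"
    unfolding long_connector_def prod.case
    apply (intro conjI)
    using C0 s(1) ex2 hv' ww a2 nw C'(4) vadj_sym[OF sym s(2)] \<open>C0 = C\<close> by simp_all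
  thus ?thesis using ** by (intro exI[of _ "(s,v,w,u)"]) simp
qed


lemma img_internal:
  "(x, C) \<in> (\<lambda>(s, v, w, u). {(v, C), (w, C)}) p \<Longrightarrow> x \<in> internal p"
  by (cases p) auto

lemma internal_img:
  "x \<in> internal p \<Longrightarrow> (x, C) \<in> (\<lambda>(s, v, w, u). {(v, C), (w, C)}) p"
  by (cases p) auto

lemma main:
  fixes V :: "nat set" and C :: "nat vnode set"
  assumes finV: "finite V" and sym: "\<forall>x y. E x y \<longrightarrow> E y x"
    and Pd: "internally_disjoint P" and Pl: "\<forall>p\<in>P. long_connector V E L l cls i C p"
    and M: "maximal_matching (helper_edges V E L l cls i) M"
  shows "\<exists>P'. internally_disjoint P' \<and> (\<forall>p\<in>P'. long_connector V E L l cls i C p) \<and>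
           card P \<le> 2 * card P' \<and>
           (\<lambda>(s, v, w, u). {(v, C), (w, C)}) ` P' = {e \<in> M. \<exists>v w. e = {(v, C), (w, C)}}"
proof -
  define img :: "nat vnode \<times> nat vnode \<times> nat vnode \<times> nat vnode \<Rightarrow> (nat vnode \<times> nat vnode set) set"
    where "img = (\<lambda>(s, v, w, u). {(v, C), (w, C)})"
  define MC where "MC = {e \<in> M. \<exists>v w. e = {(v, C), (w, C)}}"
  have Msub: "M \<subseteq> helper_edges V E L l cls i" using M by (simp add: maximal_matching_def)
  have Mdisj: "\<forall>e\<in>M. \<forall>f\<in>M. e \<noteq> f \<longrightarrow> e \<inter> f = {}" using M by (simp add: maximal_matching_def)
  have Mmax: "\<forall>e\<in>helper_edges V E L l cls i - M. \<exists>f\<in>M. e \<inter> f \<noteq> {}"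
    using M by (simp add: maximal_matching_def)
  have exlc: "\<exists>p. long_connector V E L l cls i C p \<and> img p = e" if "e \<in> MC" for e
  proof -
    from that obtain v w where "e \<in> M" "e = {(v, C), (w, C)}" unfolding MC_def by auto
    thus ?thesis using edge_lc[OF sym, of e] Msub unfolding img_def by blast
  qed
  have UMC: "\<Union>MC \<subseteq> vnodes V L \<times> {C}"
  proof
    fix x assume "x \<in> \<Union>MC"
    then obtain e where e: "e \<in> MC" "x \<in> e" by auto
    then obtain p where p: "long_connector V E L l cls i C p" "img p = e" using exlc by blast
    obtain s v w u where pp: "p = (s, v, w, u)" by (cases p)
    have "v \<in> vnodes V L" "w \<in> vnodes V L" using p(1) unfolding pp long_connector_def by auto
    thus "x \<in> vnodes V L \<times> {C}" using e p(2) unfolding pp img_def by auto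
  qed
  have finU: "finite (\<Union>MC)" using UMC finite_vnodes[OF finV] by (meson finite_SigmaI finite.emptyI finite.insertI finite_subset)
  have finMC: "finite MC" using finU by (meson Pow_iff Union_upper finite_Pow_iff finite_subset subsetI)
  have card2: "card e \<le> 2" if "e \<in> MC" for e
    using that unfolding MC_def by (auto simp: card_insert_if)
  have hit: "\<exists>x. x \<in> img p \<and> x \<in> \<Union>MC" if pP: "p \<in> P" for p
  proof -
    obtain s v w u where pp: "p = (s, v, w, u)" by (cases p)
    have eH: "img p \<in> helper_edges V E L l cls i"
      using lc_edge[OF sym] Pl pP unfolding pp img_def by auto
    show ?thesis
    proof (cases "img p \<in> M")
      case True
      hence "img p \<in> MC" unfolding MC_def pp img_def by auto
      hence "(v, C) \<in> img p \<and> (v, C) \<in> \<Union>MC" unfolding pp img_def by blast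
      thus ?thesis by blast
    next
      case False
      then obtain f where f: "f \<in> M" "img p \<inter> f \<noteq> {}" using Mmax eH by blast
      then obtain x where x: "x \<in> img p" "x \<in> f" by auto
      have sx: "snd x = C" using x(1) unfolding pp img_def by auto
      have "f \<in> helper_edges V E L l cls i" using f Msub by auto
      then obtain v' w' C0 where fe: "f = {(v', C0), (w', C0)}" unfolding helper_edges_def by blast
      have "C0 = C" using x(2) sx fe by auto
      hence "f \<in> MC" using f fe unfolding MC_def by auto
      hence "x \<in> img p \<and> x \<in> \<Union>MC" using x by blast
      thus ?thesis by blast
    qed
  qed
  define xf where "xf p = (SOME x. x \<in> img p \<and> x \<in> \<Union>MC)" for p
  have xf: "xf p \<in> img p \<and> xf p \<in> \<Union>MC" if "p \<in> P" for p
    unfolding xf_def using someI_ex[OF hit[OF that]] .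
  have inj: "inj_on xf P"
  proof (rule inj_onI)
    fix p q assume pq: "p \<in> P" "q \<in> P" "xf p = xf q"
    show "p = q"
    proof (rule ccontr)
      assume "p \<noteq> q"
      hence d: "internal p \<inter> internal q = {}" using Pd pq unfolding internally_disjoint_def by auto
      obtain a b where ab: "xf p = (a, b)" by (cases "xf p")
      have "(a, b) \<in> img p" "(a, b) \<in> img q" using xf pq ab by metis+
      moreover have "b = C" using \<open>(a, b) \<in> img p\<close> unfolding img_def by (cases p) auto
      ultimately have ab2: "(a, C) \<in> img p" "(a, C) \<in> img q" by simp_all
      have "a \<in> internal p" by (rule img_internal[of a C p]) (use ab2(1) in \<open>simp only: img_def\<close>)
      moreover have "a \<in> internal q" by (rule img_internal[of a C q]) (use ab2(2) in \<open>simp only: img_def\<close>)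
      ultimately have "a \<in> internal p \<inter> internal q" by simp
      with d show False by simp
    qed
  qed
  have "card P \<le> card (\<Union>MC)"
  proof -
    have "xf ` P \<subseteq> \<Union>MC" using xf by blast
    thus ?thesis using card_inj_on_le[OF inj _ finU] by blast
  qed
  also have "\<dots> \<le> sum card MC" using card_Union_le_sum_card by blast
  also have "\<dots> \<le> card MC * 2" using sum_bounded_above[of MC card 2] card2 by simp
  finally have c1: "card P \<le> 2 * card MC" by simp
  define g where "g e = (SOME p. long_connector V E L l cls i C p \<and> img p = e)" for e
  have g: "long_connector V E L l cls i C (g e) \<and> img (g e) = e" if "e \<in> MC" for e
    unfolding g_def using someI_ex[OF exlc[OF that]] .
  have gi: "\<forall>e\<in>MC. img (g e) = e" using g by blast
  have injg: "inj_on g MC"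
  proof (rule inj_onI)
    fix a b assume "a \<in> MC" "b \<in> MC" "g a = g b"
    thus "a = b" using gi by metis
  qed
  have "(\<lambda>e. img (g e)) ` MC = (\<lambda>e. e) ` MC" by (rule image_cong) (use gi in auto)
  hence imgP: "img ` g ` MC = MC" by (simp add: image_image)
  have dis: "internally_disjoint (g ` MC)"
    unfolding internally_disjoint_def
  proof (intro ballI impI)
    fix p q assume p: "p \<in> g ` MC" and q: "q \<in> g ` MC" and ne: "p \<noteq> q"
    obtain e where e: "e \<in> MC" "p = g e" using p by auto
    obtain e' where e': "e' \<in> MC" "q = g e'" using q by auto
    have "e \<noteq> e'" using ne e e' by auto
    moreover have "e \<in> M" "e' \<in> M" using e(1) e'(1) unfolding MC_def by blast+
    ultimately have ee: "e \<inter> e' = {}" using Mdisj by blast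
    have ie: "img p = e" "img q = e'" using gi e e' by auto
    show "internal p \<inter> internal q = {}"
    proof (rule ccontr)
      assume "internal p \<inter> internal q \<noteq> {}"
      then obtain x where x: "x \<in> internal p" "x \<in> internal q" by auto
      have "(x, C) \<in> img p" unfolding img_def by (rule internal_img) (rule x(1))
      moreover have "(x, C) \<in> img q" unfolding img_def by (rule internal_img) (rule x(2))
      ultimately have "(x, C) \<in> e \<inter> e'" using ie by simp
      with ee show False by simp
    qed
  qed
  show ?thesis
  proof (rule exI[of _ "g ` MC"], intro conjI)
    show "internally_disjoint (g ` MC)" by (rule dis)
    show "\<forall>p\<in>g ` MC. long_connector V E L l cls i C p" using g by blast
    show "card P \<le> 2 * card (g ` MC)" using c1 card_image[OF injg] by simp
    show "(\<lambda>(s, v, w, u). {(v, C), (w, C)}) ` g ` MC = {e \<in> M. \<exists>v w. e = {(v, C), (w, C)}}"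
      using imgP unfolding img_def MC_def .
  qed
qed

theorem lemma8:
  "\<forall>c::real. c > 0 \<longrightarrow> (\<exists>c'::real. c' > 0 \<and>
    (\<forall>(V :: nat set) (E :: nat \<Rightarrow> nat \<Rightarrow> bool) (L :: nat) (l :: nat) (t :: nat)
       (cls :: nat vnode \<Rightarrow> nat) (i :: nat) (C :: nat vnode set)
       (M :: (nat vnode \<times> nat vnode set) set set).
      finite V \<and> (\<forall>x y. E x y \<longrightarrow> x \<in> V \<and> y \<in> V) \<and> (\<forall>x y. E x y \<longrightarrow> E y x) \<and>
      (\<forall>x. \<not> E x x) \<and>
      L + 1 \<le> l \<and> l \<le> 2 * L \<and>
      (\<forall>a\<in>vnodes V L. layer a < l \<longrightarrow> cls a \<in> {1..t}) \<and>
      i \<in> {1..t} \<and>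
      C \<in> components V E L l cls i \<and>
      (\<exists>P. internally_disjoint P \<and> (\<forall>p\<in>P. long_connector V E L l cls i C p) \<and>
           real (card P) \<ge> c * real (vertex_connectivity V E)) \<and>
      maximal_matching (helper_edges V E L l cls i) M
      \<longrightarrow>
      (\<exists>P. internally_disjoint P \<and> (\<forall>p\<in>P. long_connector V E L l cls i C p) \<and>
           real (card P) \<ge> c' * real (vertex_connectivity V E) \<and>
           (\<lambda>(s, v, w, u). {(v, C), (w, C)}) ` P = {e \<in> M. \<exists>v w. e = {(v, C), (w, C)}})))"
proof (intro allI impI)
  fix c :: real assume c: "c > 0"
  show "(\<exists>c'::real. c' > 0 \<and>
    (\<forall>(V :: nat set) (E :: nat \<Rightarrow> nat \<Rightarrow> bool) (L :: nat) (l :: nat) (t :: nat)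
       (cls :: nat vnode \<Rightarrow> nat) (i :: nat) (C :: nat vnode set)
       (M :: (nat vnode \<times> nat vnode set) set set).
      finite V \<and> (\<forall>x y. E x y \<longrightarrow> x \<in> V \<and> y \<in> V) \<and> (\<forall>x y. E x y \<longrightarrow> E y x) \<and>
      (\<forall>x. \<not> E x x) \<and>
      L + 1 \<le> l \<and> l \<le> 2 * L \<and>
      (\<forall>a\<in>vnodes V L. layer a < l \<longrightarrow> cls a \<in> {1..t}) \<and>
      i \<in> {1..t} \<and>
      C \<in> components V E L l cls i \<and>
      (\<exists>P. internally_disjoint P \<and> (\<forall>p\<in>P. long_connector V E L l cls i C p) \<and>
           real (card P) \<ge> c * real (vertex_connectivity V E)) \<and>
      maximal_matching (helper_edges V E L l cls i) M
      \<longrightarrow>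
      (\<exists>P. internally_disjoint P \<and> (\<forall>p\<in>P. long_connector V E L l cls i C p) \<and>
           real (card P) \<ge> c' * real (vertex_connectivity V E) \<and>
           (\<lambda>(s, v, w, u). {(v, C), (w, C)}) ` P = {e \<in> M. \<exists>v w. e = {(v, C), (w, C)}})))"
  proof (rule exI[of _ "c / 2"], intro conjI allI impI)
    show "c / 2 > 0" using c by simp
    fix V :: "nat set" and E L l t cls i and C :: "nat vnode set" and M
    assume H: "finite V \<and> (\<forall>x y. E x y \<longrightarrow> x \<in> V \<and> y \<in> V) \<and> (\<forall>x y. E x y \<longrightarrow> E y x) \<and>
      (\<forall>x. \<not> E x x) \<and>
      L + 1 \<le> l \<and> l \<le> 2 * L \<and>
      (\<forall>a\<in>vnodes V L. layer a < l \<longrightarrow> cls a \<in> {1..t}) \<and>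
      i \<in> {1..t} \<and>
      C \<in> components V E L l cls i \<and>
      (\<exists>P. internally_disjoint P \<and> (\<forall>p\<in>P. long_connector V E L l cls i C p) \<and>
           real (card P) \<ge> c * real (vertex_connectivity V E)) \<and>
      maximal_matching (helper_edges V E L l cls i) M"
    have fin: "finite V" using H by (elim conjE) assumption
    have sym: "\<forall>x y. E x y \<longrightarrow> E y x" using H by (elim conjE) assumption
    have M: "maximal_matching (helper_edges V E L l cls i) M" using H by (elim conjE) assumption
    have "\<exists>P. internally_disjoint P \<and> (\<forall>p\<in>P. long_connector V E L l cls i C p) \<and>
           real (card P) \<ge> c * real (vertex_connectivity V E)" using H by (elim conjE) assumption
    then obtain P where Pd: "internally_disjoint P" and Pl: "\<forall>p\<in>P. long_connector V E L l cls i C p"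
      and Pc: "real (card P) \<ge> c * real (vertex_connectivity V E)" by (elim exE conjE)
    obtain P' where P': "internally_disjoint P'" "\<forall>p\<in>P'. long_connector V E L l cls i C p"
      "card P \<le> 2 * card P'"
      "(\<lambda>(s, v, w, u). {(v, C), (w, C)}) ` P' = {e \<in> M. \<exists>v w. e = {(v, C), (w, C)}}"
      using main[OF fin sym Pd Pl M] by (elim exE conjE)
    have "real (card P) \<le> 2 * real (card P')" using P'(3) by linarith
    hence cc: "c / 2 * real (vertex_connectivity V E) \<le> real (card P')" using Pc by linarith
    show "\<exists>P. internally_disjoint P \<and> (\<forall>p\<in>P. long_connector V E L l cls i C p) \<and>
           real (card P) \<ge> c / 2 * real (vertex_connectivity V E) \<and>
           (\<lambda>(s, v, w, u). {(v, C), (w, C)}) ` P = {e \<in> M. \<exists>v w. e = {(v, C), (w, C)}}"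
      by (rule exI[of _ P'], intro conjI) (rule P'(1), rule P'(2), rule cc, rule P'(4))
  qed
qed

end
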